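(* Let $T$ be an Aronszajn tree. Then $\diamondsuit$ implies $\lnot\sigma\mathsf{U}_T$; that is, there is a ladder system coloring which is not $\sigma$-$T$-uniformizable.
   Context: A ladder system is $\vec l=\langle l_\alpha:\alpha\in\omega_1\cap\mathrm{Lim}\rangle$ with each $l_\alpha\subseteq\alpha$ cofinal in $\alpha$ of order type $\omega$; $l_{\alpha,n}$ is its $n$-th element. A ladder system coloring is $\langle\vec l,\vec c\rangle$ with $\vec c=\langle c_\alpha:l_\alpha\to\omega\rangle$. For a tree $T$ of height $\omega_1$, $T_\alpha$ is its $\alpha$-th level, $T\restriction\mathrm{Lim}=\bigcup_{\alpha\in\mathrm{Lim}}T_\alpha$, and $t\restriction\gamma$ is the predecessor of $t$ on level $\gamma$. $\langle\vec l,\vec c\rangle$ is $\sigma$-$T$-uniformizable if there are a decomposition $T\restriction\mathrm{Lim}=\bigcup_{n<\omega}A_n$ and $f:T\restriction\mathrm{Lim}\to\omega$ such that for each $n$ the set $\{\langle t\restriction l_{\alpha,k},c_\alpha(l_{\alpha,k})\rangle:\alpha\in\mathrm{Lim},\ t\in A_n\cap T_\alpha,\ k\ge f(t)\}$ is a function. *)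

theory Defs
  imports "HOL-Library.Countable_Set"
begin

text \<open>Countable ordinals are modelled by a well-ordered type 'o which is
  omega_1-like: uncountable, with all proper initial segments countable.\<close>

definition omega1_like :: "'o::wellorder itself \<Rightarrow> bool" where
  "omega1_like _ \<longleftrightarrow> uncountable (UNIV :: 'o set) \<and> (\<forall>a::'o. countable {..<a})"

definition is_limit :: "'o::wellorder \<Rightarrow> bool" where
  "is_limit a \<longleftrightarrow> (\<exists>b. b < a) \<and> (\<forall>b<a. \<exists>c. b < c \<and> c < a)"

definition club :: "'o::wellorder set \<Rightarrow> bool" where
  "club C \<longleftrightarrow> (\<forall>a. \<exists>b\<in>C. a < b) \<and>
     (\<forall>a. is_limit a \<and> (\<forall>b<a. \<exists>c\<in>C. b < c \<and> c < a) \<longrightarrow> a \<in> C)"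

definition stationary :: "'o::wellorder set \<Rightarrow> bool" where
  "stationary S \<longleftrightarrow> (\<forall>C. club C \<longrightarrow> S \<inter> C \<noteq> {})"

definition diamond :: "'o::wellorder itself \<Rightarrow> bool" where
  "diamond _ \<longleftrightarrow> (\<exists>A :: 'o \<Rightarrow> 'o set. (\<forall>a. A a \<subseteq> {..<a}) \<and>
     (\<forall>X :: 'o set. stationary {a. X \<inter> {..<a} = A a}))"

definition preds :: "'n set \<Rightarrow> ('n \<Rightarrow> 'n \<Rightarrow> bool) \<Rightarrow> 'n \<Rightarrow> 'n set" where
  "preds T lt t = {s\<in>T. lt s t}"

definition has_height :: "'n set \<Rightarrow> ('n \<Rightarrow> 'n \<Rightarrow> bool) \<Rightarrow> 'n \<Rightarrow> 'o::wellorder \<Rightarrow> bool" where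
  "has_height T lt t a \<longleftrightarrow> (\<exists>f. bij_betw f (preds T lt t) {..<a} \<and>
      (\<forall>s\<in>preds T lt t. \<forall>s'\<in>preds T lt t. lt s s' \<longleftrightarrow> f s < f s'))"

definition level :: "'n set \<Rightarrow> ('n \<Rightarrow> 'n \<Rightarrow> bool) \<Rightarrow> 'o::wellorder \<Rightarrow> 'n set" where
  "level T lt a = {t\<in>T. has_height T lt t a}"

definition height :: "'n set \<Rightarrow> ('n \<Rightarrow> 'n \<Rightarrow> bool) \<Rightarrow> 'n \<Rightarrow> 'o::wellorder" where
  "height T lt t = (THE a. has_height T lt t a)"

definition omega1_tree :: "'n set \<Rightarrow> ('n \<Rightarrow> 'n \<Rightarrow> bool) \<Rightarrow> 'o::wellorder itself \<Rightarrow> bool" where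
  "omega1_tree T lt _ \<longleftrightarrow>
     (\<forall>t\<in>T. \<not> lt t t) \<and>
     (\<forall>s\<in>T. \<forall>t\<in>T. \<forall>u\<in>T. lt s t \<and> lt t u \<longrightarrow> lt s u) \<and>
     (\<forall>t\<in>T. \<forall>s\<in>preds T lt t. \<forall>s'\<in>preds T lt t. lt s s' \<or> s = s' \<or> lt s' s) \<and>
     (\<forall>t\<in>T. \<exists>a::'o. has_height T lt t a) \<and>
     (\<forall>a::'o. level T lt a \<noteq> {})"

definition aronszajn :: "'n set \<Rightarrow> ('n \<Rightarrow> 'n \<Rightarrow> bool) \<Rightarrow> 'o::wellorder itself \<Rightarrow> bool" where
  "aronszajn T lt ty \<longleftrightarrow> omega1_tree T lt ty \<and>
     (\<forall>a::'o. countable (level T lt a)) \<and>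
     \<not> (\<exists>B\<subseteq>T. (\<forall>s\<in>B. \<forall>t\<in>B. lt s t \<or> s = t \<or> lt t s) \<and>
            (\<forall>a::'o. B \<inter> level T lt a \<noteq> {}))"

definition restr :: "'n set \<Rightarrow> ('n \<Rightarrow> 'n \<Rightarrow> bool) \<Rightarrow> 'n \<Rightarrow> 'o::wellorder \<Rightarrow> 'n" where
  "restr T lt t g = (THE s. s \<in> level T lt g \<and> (s = t \<or> lt s t))"

definition ladder_system :: "('o::wellorder \<Rightarrow> nat \<Rightarrow> 'o) \<Rightarrow> bool" where
  "ladder_system l \<longleftrightarrow> (\<forall>a. is_limit a \<longrightarrow>
     strict_mono (l a) \<and> (\<forall>n. l a n < a) \<and> (\<forall>b<a. \<exists>n. b < l a n))"

text \<open>Colouring c a : l_a \<rightarrow> omega (only values on the range of l a matter).\<close>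
definition sigma_T_uniformizable ::
  "'n set \<Rightarrow> ('n \<Rightarrow> 'n \<Rightarrow> bool) \<Rightarrow> ('o::wellorder \<Rightarrow> nat \<Rightarrow> 'o) \<Rightarrow> ('o \<Rightarrow> 'o \<Rightarrow> nat) \<Rightarrow> bool" where
  "sigma_T_uniformizable T lt l c \<longleftrightarrow>
     (\<exists>(A :: nat \<Rightarrow> 'n set) (f :: 'n \<Rightarrow> nat).
        (\<Union>n. A n) = (\<Union>a\<in>{a::'o. is_limit a}. level T lt a) \<and>
        (\<forall>n. single_valued
           {(restr T lt t (l a k), c a (l a k)) | (a::'o) t k.
              is_limit a \<and> t \<in> A n \<inter> level T lt a \<and> f t \<le> k}))"

end

theory Submission
  imports Defs
begin


lemma smono_ge:
  fixes h :: "'o::wellorder \<Rightarrow> 'o"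
  assumes m: "\<And>x y. x < y \<Longrightarrow> y < b \<Longrightarrow> h x < h y"
  shows "x < b \<Longrightarrow> x \<le> h x"
proof (induction x rule: less_induct)
  case (less x)
  show ?case
  proof (rule ccontr)
    assume "\<not> x \<le> h x"
    hence hx: "h x < x" by simp
    hence "h x < b" using less.prems by simp
    hence "h x \<le> h (h x)" using less.IH hx by blast
    moreover have "h (h x) < h x" using m[OF hx less.prems] .
    ultimately show False by simp
  qed
qed

lemma iso_le:
  fixes a b :: "'o::wellorder"
  assumes fb: "bij_betw f P {..<a}" and fo: "\<forall>s\<in>P. \<forall>s'\<in>P. lt s s' \<longleftrightarrow> f s < f s'"
    and gb: "bij_betw g P {..<b}" and go: "\<forall>s\<in>P. \<forall>s'\<in>P. lt s s' \<longleftrightarrow> g s < g s'"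
  shows "b \<le> a"
proof (rule ccontr)
  assume "\<not> b \<le> a"
  hence ab: "a < b" by simp
  define h where "h = (\<lambda>x. f (inv_into P g x))"
  have inP: "inv_into P g x \<in> P" if "x < b" for x
    using that gb by (metis bij_betw_def inv_into_into lessThan_iff)
  have gi: "g (inv_into P g x) = x" if "x < b" for x
    using that gb by (metis bij_betw_def f_inv_into_f lessThan_iff)
  have m: "h x < h y" if "x < y" "y < b" for x y
  proof -
    have "x < b" using that by simp
    have "lt (inv_into P g x) (inv_into P g y)"
      using go inP[OF \<open>x < b\<close>] inP[OF \<open>y < b\<close>] gi[OF \<open>x < b\<close>] gi[OF \<open>y < b\<close>] that(1) by auto
    thus ?thesis unfolding h_def using fo inP[OF \<open>x < b\<close>] inP[OF \<open>y < b\<close>] by auto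
  qed
  have "a \<le> h a" using smono_ge[of b h a] m ab by blast
  moreover have "h a < a" unfolding h_def using fb inP[OF ab] bij_betwE by fastforce
  ultimately show False by simp
qed

lemma height_uniq:
  fixes a b :: "'o::wellorder"
  assumes "has_height T lt u a" "has_height T lt u b"
  shows "a = b"
proof -
  from assms obtain f g where f1: "bij_betw f (preds T lt u) {..<a}"
     and f2: "\<forall>s\<in>preds T lt u. \<forall>s'\<in>preds T lt u. lt s s' \<longleftrightarrow> f s < f s'"
     and g1: "bij_betw g (preds T lt u) {..<b}"
     and g2: "\<forall>s\<in>preds T lt u. \<forall>s'\<in>preds T lt u. lt s s' \<longleftrightarrow> g s < g s'"
    unfolding has_height_def by blast
  have "b \<le> a" by (rule iso_le[OF f1 f2 g1 g2])
  moreover have "a \<le> b" by (rule iso_le[OF g1 g2 f1 f2])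
  ultimately show ?thesis by simp
qed

lemma restr_level:
  assumes tree: "omega1_tree T lt TYPE('o::wellorder)" and t: "t \<in> level T lt (\<alpha>::'o)"
    and b: "\<beta> < \<alpha>"
  shows "restr T lt t \<beta> \<in> level T lt \<beta>"
proof -
  from tree have trans: "\<forall>s\<in>T. \<forall>t\<in>T. \<forall>u\<in>T. lt s t \<and> lt t u \<longrightarrow> lt s u"
    unfolding omega1_tree_def by (elim conjE) assumption
  from t have tT: "t \<in> T" and "has_height T lt t \<alpha>" by (auto simp: level_def)
  then obtain f where fb: "bij_betw f (preds T lt t) {..<\<alpha>}"
    and fo: "\<forall>s\<in>preds T lt t. \<forall>s'\<in>preds T lt t. lt s s' \<longleftrightarrow> f s < f s'"
    unfolding has_height_def by blast
  have injf: "inj_on f (preds T lt t)" using fb by (simp add: bij_betw_def)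
  have imf: "f ` preds T lt t = {..<\<alpha>}" using fb by (simp add: bij_betw_def)
  have hh: "has_height T lt u (f u)" if u: "u \<in> preds T lt t" for u
  proof -
    have uT: "u \<in> T" and ut: "lt u t" using u by (auto simp: preds_def)
    have pe: "preds T lt u = {x \<in> preds T lt t. f x < f u}"
    proof
      show "preds T lt u \<subseteq> {x \<in> preds T lt t. f x < f u}"
      proof
        fix x assume "x \<in> preds T lt u"
        hence x: "x \<in> T" "lt x u" by (auto simp: preds_def)
        have "lt x t" using trans x uT ut tT by blast
        hence xp: "x \<in> preds T lt t" using x by (simp add: preds_def)
        hence "f x < f u" using fo u x(2) by blast
        thus "x \<in> {x \<in> preds T lt t. f x < f u}" using xp by simp
      qed
      show "{x \<in> preds T lt t. f x < f u} \<subseteq> preds T lt u"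
      proof
        fix x assume x: "x \<in> {x \<in> preds T lt t. f x < f u}"
        hence xp: "x \<in> preds T lt t" and "f x < f u" by auto
        hence "lt x u" using fo u by blast
        thus "x \<in> preds T lt u" using xp by (simp add: preds_def)
      qed
    qed
    have fu: "f u < \<alpha>" using imf u by blast
    have bij: "bij_betw f {x \<in> preds T lt t. f x < f u} {..<f u}"
      unfolding bij_betw_def
    proof
      show "inj_on f {x \<in> preds T lt t. f x < f u}"
        by (rule inj_on_subset[OF injf]) blast
      show "f ` {x \<in> preds T lt t. f x < f u} = {..<f u}"
      proof
        show "f ` {x \<in> preds T lt t. f x < f u} \<subseteq> {..<f u}" by blast
        show "{..<f u} \<subseteq> f ` {x \<in> preds T lt t. f x < f u}"
        proof
          fix y assume "y \<in> {..<f u}"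
          hence yl: "y < f u" by simp
          hence "y \<in> {..<\<alpha>}" using fu by simp
          hence "y \<in> f ` preds T lt t" using imf by simp
          then obtain x where "x \<in> preds T lt t" "y = f x" by blast
          thus "y \<in> f ` {x \<in> preds T lt t. f x < f u}" using yl by blast
        qed
      qed
    qed
    have ord: "\<forall>s\<in>{x \<in> preds T lt t. f x < f u}. \<forall>s'\<in>{x \<in> preds T lt t. f x < f u}.
       lt s s' \<longleftrightarrow> f s < f s'" using fo by blast
    show ?thesis unfolding has_height_def pe using bij ord by blast
  qed
  have \<beta>im: "\<beta> \<in> f ` preds T lt t" using imf b by simp
  define s where "s = inv_into (preds T lt t) f \<beta>"
  have s1: "s \<in> preds T lt t" unfolding s_def by (rule inv_into_into[OF \<beta>im])
  have s2: "f s = \<beta>" unfolding s_def by (rule f_inv_into_f[OF \<beta>im])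
  have sT: "s \<in> T" using s1 by (simp add: preds_def)
  have "has_height T lt s \<beta>" using hh[OF s1] s2 by simp
  hence slev: "s \<in> level T lt \<beta>" using sT by (simp add: level_def)
  have "restr T lt t \<beta> = s" unfolding restr_def
  proof (rule the_equality)
    have "lt s t" using s1 by (simp add: preds_def)
    thus "s \<in> level T lt \<beta> \<and> (s = t \<or> lt s t)" using slev by simp
    fix s' assume s': "s' \<in> level T lt \<beta> \<and> (s' = t \<or> lt s' t)"
    have s'T: "s' \<in> T" and s'h: "has_height T lt s' \<beta>" using s' by (auto simp: level_def)
    show "s' = s"
    proof (cases "s' = t")
      case True
      hence "has_height T lt t \<beta>" using s'h by simp
      hence "\<beta> = \<alpha>" using \<open>has_height T lt t \<alpha>\<close> by (rule height_uniq)
      thus ?thesis using b by simp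
    next
      case False
      hence "lt s' t" using s' by blast
      hence s'p: "s' \<in> preds T lt t" using s'T by (simp add: preds_def)
      have "f s' = \<beta>" using hh[OF s'p] s'h by (rule height_uniq)
      hence "f s' = f s" using s2 by simp
      thus ?thesis using inj_onD[OF injf _ s'p s1] by blast
    qed
  qed
  thus ?thesis using slev by simp
qed



unbundle cardinal_syntax

lemma countable_bounded:
  assumes o1: "omega1_like TYPE('o::wellorder)" and B: "countable (B :: 'o set)"
  shows "\<exists>x. \<forall>b\<in>B. b < x"
proof (rule ccontr)
  assume "\<not> (\<exists>x. \<forall>b\<in>B. b < x)"
  hence "\<forall>x. \<exists>b\<in>B. x \<le> b" by (meson not_le)
  hence "(UNIV :: 'o set) \<subseteq> (\<Union>b\<in>B. insert b {..<b})" by (auto simp: order.order_iff_strict)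
  moreover have "countable (\<Union>b\<in>B. insert b {..<b})"
    using B o1 by (auto simp: omega1_like_def)
  ultimately have "countable (UNIV :: 'o set)" using countable_subset by blast
  thus False using o1 by (simp add: omega1_like_def)
qed

lemma countable_atMost:
  assumes o1: "omega1_like TYPE('o::wellorder)"
  shows "countable {..(g::'o)}"
proof -
  have "{..g} = insert g {..<g}" by auto
  thus ?thesis using o1 by (simp add: omega1_like_def)
qed

definition lad :: "'o::wellorder \<Rightarrow> nat \<Rightarrow> 'o" where
  "lad a n = rec_nat (from_nat_into {..<a} 0)
     (\<lambda>n x. SOME c. max x (from_nat_into {..<a} (Suc n)) < c \<and> c < a) n"

lemma lad_0: "lad a 0 = from_nat_into {..<a} 0" by (simp add: lad_def)
lemma lad_Suc: "lad a (Suc n) = (SOME c. max (lad a n) (from_nat_into {..<a} (Suc n)) < c \<and> c < a)"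
  by (simp add: lad_def)

lemma ladder_exists:
  assumes o1: "omega1_like TYPE('o::wellorder)"
  shows "\<exists>l::'o \<Rightarrow> nat \<Rightarrow> 'o. ladder_system l"
proof -
  have "strict_mono (lad a) \<and> (\<forall>n. lad a n < a) \<and> (\<forall>b<a. \<exists>n. b < lad a n)"
    if lim: "is_limit a" for a :: 'o
  proof -
    let ?e = "from_nat_into {..<a}"
    have ne: "{..<a} \<noteq> {}" using lim by (auto simp: is_limit_def)
    have cnt: "countable {..<a}" using o1 by (simp add: omega1_like_def)
    have ein: "?e n < a" for n using from_nat_into[OF ne] by simp
    have step: "max (lad a n) (?e (Suc n)) < lad a (Suc n) \<and> lad a (Suc n) < a"
      if "lad a n < a" for n
    proof -
      have "max (lad a n) (?e (Suc n)) < a" using that ein by simp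
      moreover have "\<forall>b<a. \<exists>c. b < c \<and> c < a" using lim by (simp add: is_limit_def)
      ultimately obtain c where "max (lad a n) (?e (Suc n)) < c \<and> c < a" by blast
      thus ?thesis unfolding lad_Suc by (rule someI)
    qed
    have lt: "lad a n < a" for n
    proof (induction n)
      case 0 then show ?case using ein by (simp add: lad_0)
    next
      case (Suc n) then show ?case using step by blast
    qed
    have sm: "strict_mono (lad a)"
      unfolding strict_mono_Suc_iff using step lt by fastforce
    have ge: "?e n \<le> lad a n" for n
    proof (cases n)
      case 0 then show ?thesis by (simp add: lad_0)
    next
      case (Suc m) then show ?thesis using step[OF lt[of m]] by (auto intro: less_imp_le)
    qed
    have "\<exists>n. b < lad a n" if bl: "b < a" for b
    proof -
      obtain m where "?e m = b" using from_nat_into_surj[OF cnt, of b] bl by auto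
      hence "b \<le> lad a m" using ge by metis
      also have "\<dots> < lad a (Suc m)" using sm by (simp add: strict_mono_def)
      finally show ?thesis by blast
    qed
    thus ?thesis using sm lt by blast
  qed
  thus ?thesis unfolding ladder_system_def by blast
qed

lemma code_exists:
  assumes o1: "omega1_like TYPE('o::wellorder)"
    and lev: "\<forall>a::'o. countable (level T lt a)"
  shows "\<exists>code :: nat \<times> 'n \<times> nat \<Rightarrow> 'o.
     inj_on code (UNIV \<times> (\<Union>a::'o. level T lt a) \<times> UNIV)"
proof -
  let ?r = "|UNIV :: 'o set|"
  have unc: "uncountable (UNIV :: 'o set)" using o1 unfolding omega1_like_def by (elim conjE)
  have inf: "\<not> finite (UNIV :: 'o set)"
  proof
    assume "finite (UNIV :: 'o set)"
    hence "countable (UNIV :: 'o set)" by (rule countable_finite)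
    thus False using unc by simp
  qed
  have F: "Field ?r = UNIV" by (rule Field_card_of)
  have infF: "\<not> finite (Field ?r)" unfolding F by (rule inf)
  have C: "Card_order ?r" by (rule card_of_Card_order)
  have nat: "|UNIV :: nat set| \<le>o ?r" by (rule infinite_iff_card_of_nat[THEN iffD1, OF inf])
  have LN: "|level T lt a| \<le>o |UNIV::nat set|" for a :: 'o
  proof -
    have "inj_on (to_nat_on (level T lt a)) (level T lt a)"
      using lev by (blast intro: inj_on_to_nat_on)
    hence "\<exists>f. inj_on f (level T lt a) \<and> f ` (level T lt a) \<subseteq> (UNIV::nat set)" by blast
    thus ?thesis by (rule card_of_ordLeq[THEN iffD1])
  qed
  have LV: "|level T lt a| \<le>o ?r" for a :: 'o
    by (rule ordLeq_transitive[OF LN nat])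
  have N: "|\<Union>a::'o. level T lt a| \<le>o ?r"
  proof (rule card_of_UNION_ordLeq_infinite[OF inf])
    show "|UNIV::'o set| \<le>o ?r" by (rule card_of_mono1) simp
    show "\<forall>i::'o\<in>UNIV. |level T lt i| \<le>o ?r" by (intro ballI) (rule LV)
  qed
  have N2: "|(\<Union>a::'o. level T lt a) \<times> (UNIV::nat set)| \<le>o ?r"
    by (rule card_of_Times_ordLeq_infinite_Field[OF infF N nat C])
  have N3: "|(UNIV::nat set) \<times> ((\<Union>a::'o. level T lt a) \<times> (UNIV::nat set))| \<le>o ?r"
    by (rule card_of_Times_ordLeq_infinite_Field[OF infF nat N2 C])
  have "\<exists>f. inj_on f ((UNIV::nat set) \<times> ((\<Union>a::'o. level T lt a) \<times> (UNIV::nat set)))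
      \<and> f ` ((UNIV::nat set) \<times> ((\<Union>a::'o. level T lt a) \<times> (UNIV::nat set))) \<subseteq> (UNIV::'o set)"
    by (rule card_of_ordLeq[THEN iffD2, OF N3])
  thus ?thesis by blast
qed



lemma main_club:
  fixes code :: "nat \<times> 'n \<times> nat \<Rightarrow> 'o::wellorder"
  assumes o1: "omega1_like TYPE('o)"
    and lev: "\<forall>a::'o. countable (level T lt a)"
  shows "club {\<alpha>::'o. is_limit \<alpha> \<and> (\<forall>\<delta><\<alpha>. \<forall>s\<in>level T lt \<delta>. \<forall>n v. code (n,s,v) < \<alpha>)}"
    (is "club ?D")
proof -
  have ex: "\<exists>x. \<gamma> < x \<and> (\<forall>\<delta>\<le>\<gamma>. \<forall>s\<in>level T lt \<delta>. \<forall>n v. code (n,s,v) < x)" for \<gamma> :: 'o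
  proof -
    let ?B = "insert \<gamma> (code ` (UNIV \<times> (\<Union>\<delta>\<in>{..\<gamma>}. level T lt \<delta>) \<times> UNIV))"
    have "countable ?B" using countable_atMost[OF o1] lev by auto
    then obtain x where "\<forall>b\<in>?B. b < x" using countable_bounded[OF o1] by blast
    thus ?thesis by fastforce
  qed
  define F where "F \<gamma> = (SOME x. \<gamma> < x \<and> (\<forall>\<delta>\<le>\<gamma>. \<forall>s\<in>level T lt \<delta>. \<forall>n v. code (n,s,v) < x))" for \<gamma>
  have F: "\<gamma> < F \<gamma> \<and> (\<forall>\<delta>\<le>\<gamma>. \<forall>s\<in>level T lt \<delta>. \<forall>n v. code (n,s,v) < F \<gamma>)" for \<gamma>
    unfolding F_def using someI_ex[OF ex] .
  have unb: "\<exists>b\<in>?D. a < b" for a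
  proof -
    define g where "g i = (F ^^ i) a" for i
    have gS: "g (Suc i) = F (g i)" for i by (simp add: g_def)
    obtain x where "\<forall>i. g i < x" using countable_bounded[OF o1, of "range g"] by auto
    define \<beta> where "\<beta> = (LEAST x. \<forall>i. g i < x)"
    have gb: "g i < \<beta>" for i unfolding \<beta>_def using LeastI[of "\<lambda>x. \<forall>i. g i < x"] \<open>\<forall>i. g i < x\<close> by blast
    have below: "\<exists>i. b \<le> g i" if "b < \<beta>" for b
    proof (rule ccontr)
      assume "\<not> (\<exists>i. b \<le> g i)"
      hence "\<forall>i. g i < b" by (simp add: not_le)
      hence "\<beta> \<le> b" unfolding \<beta>_def by (rule Least_le)
      thus False using that by simp
    qed
    have lim: "is_limit \<beta>" unfolding is_limit_def
    proof
      show "\<exists>b. b < \<beta>" using gb by blast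
      show "\<forall>b<\<beta>. \<exists>c. b < c \<and> c < \<beta>"
      proof (intro allI impI)
        fix b assume "b < \<beta>"
        then obtain i where "b \<le> g i" using below by blast
        hence "b < g (Suc i)" unfolding gS using le_less_trans[OF _ conjunct1[OF F]] by blast
        thus "\<exists>c. b < c \<and> c < \<beta>" using gb by blast
      qed
    qed
    have "\<forall>\<delta><\<beta>. \<forall>s\<in>level T lt \<delta>. \<forall>n v. code (n,s,v) < \<beta>"
    proof (intro allI impI ballI)
      fix \<delta> s n v assume "\<delta> < \<beta>" "s \<in> level T lt \<delta>"
      then obtain i where "\<delta> \<le> g i" using below by blast
      hence "code (n,s,v) < g (Suc i)" unfolding gS using F[of "g i"] \<open>s \<in> level T lt \<delta>\<close> by blast
      thus "code (n,s,v) < \<beta>" using gb order.strict_trans by blast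
    qed
    moreover have "a < \<beta>" using gb[of 0] by (simp add: g_def)
    ultimately show ?thesis using lim by blast
  qed
  have cl: "\<alpha> \<in> ?D" if lim: "is_limit \<alpha>" and cof: "\<forall>b<\<alpha>. \<exists>c\<in>?D. b < c \<and> c < \<alpha>" for \<alpha>
  proof -
    have "code (n,s,v) < \<alpha>" if dl: "\<delta> < \<alpha>" and sl: "s \<in> level T lt \<delta>" for \<delta> s n v
    proof -
      obtain c where "c \<in> ?D" "\<delta> < c" "c < \<alpha>" using cof dl by blast
      hence "code (n,s,v) < c" using sl by blast
      thus ?thesis using \<open>c < \<alpha>\<close> by (rule less_trans)
    qed
    thus ?thesis using lim by blast
  qed
  show ?thesis unfolding club_def using unb cl by blast
qed



theorem lemma4:
  fixes T :: "'n set" and lt :: "'n \<Rightarrow> 'n \<Rightarrow> bool"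
  assumes "omega1_like TYPE('o::wellorder)"
    and "aronszajn T lt TYPE('o)"
    and "diamond TYPE('o)"
  shows "\<exists>(l :: 'o \<Rightarrow> nat \<Rightarrow> 'o) (c :: 'o \<Rightarrow> 'o \<Rightarrow> nat).
           ladder_system l \<and> \<not> sigma_T_uniformizable T lt l c"
proof -
  note o1 = assms(1)
  have ar: "omega1_tree T lt TYPE('o) \<and> (\<forall>a::'o. countable (level T lt a))"
    using assms(2) unfolding aronszajn_def by (elim conjE) (intro conjI)
  have tree: "omega1_tree T lt TYPE('o)" using ar by (rule conjunct1)
  have lev: "\<forall>a::'o. countable (level T lt a)" using ar by (rule conjunct2)
  have lne0: "\<forall>a::'o. level T lt a \<noteq> {}" using tree unfolding omega1_tree_def by (elim conjE) assumption
  have lne: "level T lt a \<noteq> {}" for a :: 'o using lne0 by blast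
  obtain Ad :: "'o \<Rightarrow> 'o set" where Ad1: "\<forall>a. Ad a \<subseteq> {..<a}"
    and Ad2: "\<forall>X. stationary {a. X \<inter> {..<a} = Ad a}"
    using assms(3) by (auto simp: diamond_def)
  obtain code :: "nat \<times> 'n \<times> nat \<Rightarrow> 'o"
    where inj: "inj_on code (UNIV \<times> (\<Union>a::'o. level T lt a) \<times> UNIV)"
    using code_exists[OF o1 lev] by blast
  obtain l :: "'o \<Rightarrow> nat \<Rightarrow> 'o" where L: "ladder_system l" using ladder_exists[OF o1] by blast
  define gv where "gv a n s = (SOME v. code (n,s,v) \<in> Ad a)" for a n s
  define w where "w a = from_nat_into (level T lt a \<times> (UNIV::nat set))" for a :: 'o
  define c where "c a x = Suc (\<Sum>j\<le>(LEAST k. l a k = x). gv a (snd (w a j)) (restr T lt (fst (w a j)) x))"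
    for a x
  have cgt: "gv a (snd (w a j)) (restr T lt (fst (w a j)) (l a k)) < c a (l a k)"
    if al: "is_limit a" and jk: "j \<le> k" for a j k
  proof -
    have sm: "strict_mono (l a)" using L al by (simp add: ladder_system_def)
    have "(LEAST k'. l a k' = l a k) = k"
      by (rule Least_equality) (auto simp: strict_mono_eq[OF sm] )
    hence "c a (l a k) = Suc (\<Sum>j\<le>k. gv a (snd (w a j)) (restr T lt (fst (w a j)) (l a k)))"
      by (simp add: c_def)
    moreover have "gv a (snd (w a j)) (restr T lt (fst (w a j)) (l a k))
        \<le> (\<Sum>j\<le>k. gv a (snd (w a j)) (restr T lt (fst (w a j)) (l a k)))"
      by (rule member_le_sum) (use jk in auto)
    ultimately show ?thesis by simp
  qed
  show ?thesis
  proof (intro exI conjI)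
    show "ladder_system l" by (rule L)
    show "\<not> sigma_T_uniformizable T lt l c"
    proof
      assume "sigma_T_uniformizable T lt l c"
      then obtain A :: "nat \<Rightarrow> 'n set" and f :: "'n \<Rightarrow> nat"
        where cov: "(\<Union>n. A n) = (\<Union>a\<in>{a::'o. is_limit a}. level T lt a)"
        and sv: "\<forall>n. single_valued
           {(restr T lt t (l a k), c a (l a k)) | (a::'o) t k.
              is_limit a \<and> t \<in> A n \<inter> level T lt a \<and> f t \<le> k}"
        unfolding sigma_T_uniformizable_def by blast
      define G where "G = {(n, s, v). \<exists>(a::'o) t k. is_limit a \<and> t \<in> A n \<inter> level T lt a \<and> f t \<le> k
          \<and> s = restr T lt t (l a k) \<and> v = c a (l a k)}"
      have Gsv: "v = v'" if "(n,s,v) \<in> G" "(n,s,v') \<in> G" for n s v v'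
      proof -
        have "(s,v) \<in> {(restr T lt t (l a k), c a (l a k)) | (a::'o) t k.
              is_limit a \<and> t \<in> A n \<inter> level T lt a \<and> f t \<le> k}"
          using that(1) unfolding G_def by blast
        moreover have "(s,v') \<in> {(restr T lt t (l a k), c a (l a k)) | (a::'o) t k.
              is_limit a \<and> t \<in> A n \<inter> level T lt a \<and> f t \<le> k}"
          using that(2) unfolding G_def by blast
        ultimately show ?thesis using sv unfolding single_valued_def by blast
      qed
      have GN: "p \<in> UNIV \<times> (\<Union>a::'o. level T lt a) \<times> UNIV" if pG: "p \<in> G" for p
      proof -
        obtain n s v where p: "p = (n,s,v)" by (cases p) auto
        then obtain a t k where a: "is_limit (a::'o)" "t \<in> level T lt a" "s = restr T lt t (l a k)"
          using pG unfolding G_def by blast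
        have "l a k < a" using L a(1) by (simp add: ladder_system_def)
        hence "s \<in> level T lt (l a k)" using restr_level[OF tree a(2)] a(3) by simp
        thus ?thesis using p by blast
      qed
      define X where "X = code ` G"
      let ?D = "{\<alpha>::'o. is_limit \<alpha> \<and> (\<forall>\<delta><\<alpha>. \<forall>s\<in>level T lt \<delta>. \<forall>n v. code (n,s,v) < \<alpha>)}"
      have "club ?D" by (rule main_club[OF o1 lev])
      moreover have "stationary {a. X \<inter> {..<a} = Ad a}" using Ad2 by blast
      ultimately obtain \<alpha> where \<alpha>S: "X \<inter> {..<\<alpha>} = Ad \<alpha>" and \<alpha>D: "\<alpha> \<in> ?D"
        unfolding stationary_def by blast
      have \<alpha>lim: "is_limit \<alpha>" using \<alpha>D by blast
      obtain t where t: "t \<in> level T lt \<alpha>" using lne by blast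
      hence "t \<in> (\<Union>n. A n)" using cov \<alpha>lim by blast
      then obtain n where tn: "t \<in> A n" by blast
      have "countable (level T lt \<alpha> \<times> (UNIV::nat set))" using lev by simp
      moreover have "(t, n) \<in> level T lt \<alpha> \<times> (UNIV::nat set)" using t by simp
      ultimately have "\<exists>j. from_nat_into (level T lt \<alpha> \<times> (UNIV::nat set)) j = (t, n)"
        by (rule from_nat_into_surj)
      then obtain j where wj: "w \<alpha> j = (t, n)" unfolding w_def by blast
      define k where "k = max j (f t)"
      define s where "s = restr T lt t (l \<alpha> k)"
      have lk: "l \<alpha> k < \<alpha>" using L \<alpha>lim by (simp add: ladder_system_def)
      have sl: "s \<in> level T lt (l \<alpha> k)" unfolding s_def by (rule restr_level[OF tree t lk])
      have inG: "(n, s, c \<alpha> (l \<alpha> k)) \<in> G"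
      proof -
        have fk: "f t \<le> k" by (simp add: k_def)
        show ?thesis unfolding G_def s_def using \<alpha>lim t tn fk by blast
      qed
      have "code (n, s, c \<alpha> (l \<alpha> k)) < \<alpha>" using \<alpha>D lk sl by blast
      hence "code (n, s, c \<alpha> (l \<alpha> k)) \<in> Ad \<alpha>" using inG \<alpha>S unfolding X_def by blast
      hence gvm: "code (n, s, gv \<alpha> n s) \<in> Ad \<alpha>" unfolding gv_def by (rule someI)
      hence "code (n, s, gv \<alpha> n s) \<in> X" using \<alpha>S by blast
      then obtain p where p: "p \<in> G" "code p = code (n, s, gv \<alpha> n s)" unfolding X_def by (metis imageE)
      have "(n, s, gv \<alpha> n s) \<in> UNIV \<times> (\<Union>a::'o. level T lt a) \<times> UNIV" using sl by blast
      hence "p = (n, s, gv \<alpha> n s)" using inj_onD[OF inj p(2) GN[OF p(1)]] by blast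
      hence "gv \<alpha> n s = c \<alpha> (l \<alpha> k)" using Gsv inG p(1) by blast
      moreover have "gv \<alpha> n s < c \<alpha> (l \<alpha> k)"
        using cgt[OF \<alpha>lim, of j k] wj by (simp add: s_def k_def)
      ultimately show False by simp
    qed
  qed
qed

end
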